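(* Let $\chi:T\to\overline{\mathbf F}_p^\times$ be a smooth character with $\chi\neq\chi^s$, and let $\pi'$ be a smooth representation of $G$. Then every non-zero $\phi\in\mathrm{Hom}_P(\mathrm{Ind}_P^G\chi,\pi')$ is injective.
   Context: $F$ non-Archimedean local field of residual characteristic $p$, $G=\mathrm{GL}_2(F)$, $P$ the upper triangular Borel subgroup, $U$ its unipotent radical, $T$ the diagonal torus; characters of $T$ are viewed as characters of $P$ via $P\to P/U\cong T$. $\chi^s(\mathrm{diag}(a,d))=\chi(\mathrm{diag}(d,a))$. $\mathrm{Ind}_P^G\chi$ is the space of locally constant $f:G\to\overline{\mathbf F}_p$ with $f(bg)=\chi(b)f(g)$ for $b\in P$, with $G$ acting by right translation. Representations are smooth on $\overline{\mathbf F}_p$-vector spaces. *)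

theory Defs
  imports "HOL-Computational_Algebra.Polynomial"
begin

definition is_Fpbar :: "nat \<Rightarrow> 'k::field itself \<Rightarrow> bool" where
  "is_Fpbar p TYPE('k) \<longleftrightarrow>
     prime p \<and> CHAR('k) = p \<and>
     (\<forall>q::'k poly. degree q > 0 \<longrightarrow> (\<exists>x. poly q x = 0)) \<and>
     (\<forall>x::'k. \<exists>q::'k poly. q \<noteq> 0 \<and> (\<forall>i. coeff q i \<in> range of_nat) \<and> poly q x = 0)"

text \<open>v is the normalized discrete valuation (its value at 0 is irrelevant).
  close v n x y means x - y lies in p_F^n (the ideal of elements of valuation at least n).\<close>

definition close :: "('f::field \<Rightarrow> int) \<Rightarrow> int \<Rightarrow> 'f \<Rightarrow> 'f \<Rightarrow> bool" where
  "close v n x y \<longleftrightarrow> x = y \<or> v (x - y) \<ge> n"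

definition nonarch_local_field :: "('f::field \<Rightarrow> int) \<Rightarrow> nat \<Rightarrow> bool" where
  "nonarch_local_field v p \<longleftrightarrow>
     \<comment> \<open>discrete valuation, normalized (surjective onto Z)\<close>
     (\<forall>x y. x \<noteq> 0 \<longrightarrow> y \<noteq> 0 \<longrightarrow> v (x * y) = v x + v y) \<and>
     (\<forall>x y. x \<noteq> 0 \<longrightarrow> y \<noteq> 0 \<longrightarrow> x + y \<noteq> 0 \<longrightarrow> v (x + y) \<ge> min (v x) (v y)) \<and>
     (\<forall>n. \<exists>x. x \<noteq> 0 \<and> v x = n) \<and>
     \<comment> \<open>completeness\<close>
     (\<forall>s::nat \<Rightarrow> 'f. (\<forall>n. \<exists>N. \<forall>i\<ge>N. \<forall>j\<ge>N. close v n (s i) (s j)) \<longrightarrow>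
        (\<exists>L. \<forall>n. \<exists>N. \<forall>i\<ge>N. close v n (s i) L)) \<and>
     \<comment> \<open>finite residue field O/p_F\<close>
     (\<exists>R. finite R \<and> (\<forall>a. (a = 0 \<or> v a \<ge> 0) \<longrightarrow> (\<exists>r\<in>R. close v 1 a r))) \<and>
     \<comment> \<open>residual characteristic p\<close>
     prime p \<and> close v 1 (of_nat p) 0"

type_synonym 'f mat2 = "'f \<times> 'f \<times> 'f \<times> 'f"  \<comment> \<open>(a,b,c,d) = [[a,b],[c,d]]\<close>

fun mmul :: "'f::field mat2 \<Rightarrow> 'f mat2 \<Rightarrow> 'f mat2" where
  "mmul (a, b, c, d) (a', b', c', d') =
     (a * a' + b * c', a * b' + b * d', c * a' + d * c', c * b' + d * d')"

definition one2 :: "'f::field mat2" where "one2 = (1, 0, 0, 1)"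

definition GL2 :: "'f::field mat2 set" where
  "GL2 = {(a, b, c, d). a * d - b * c \<noteq> 0}"

definition Borel :: "'f::field mat2 set" where
  "Borel = {(a, b, c, d). c = 0 \<and> a \<noteq> 0 \<and> d \<noteq> 0}"

fun mclose :: "('f::field \<Rightarrow> int) \<Rightarrow> int \<Rightarrow> 'f mat2 \<Rightarrow> 'f mat2 \<Rightarrow> bool" where
  "mclose v n (a, b, c, d) (a', b', c', d') \<longleftrightarrow>
     close v n a a' \<and> close v n b b' \<and> close v n c c' \<and> close v n d d'"

text \<open>Congruence subgroup K_n = ker(GL_2(O) -> GL_2(O/p^n)); the K_n (n \<ge> 1) form a
  neighbourhood basis of 1 in G.\<close>
definition Kcong :: "('f::field \<Rightarrow> int) \<Rightarrow> int \<Rightarrow> 'f mat2 set" where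
  "Kcong v n = {g \<in> GL2. mclose v n g one2}"

text \<open>A character of T is given by chi a d = chi(diag(a,d)).\<close>
definition smooth_char_T ::
  "('f::field \<Rightarrow> int) \<Rightarrow> ('f \<Rightarrow> 'f \<Rightarrow> 'k::field) \<Rightarrow> bool" where
  "smooth_char_T v chi \<longleftrightarrow>
     (\<forall>a d. a \<noteq> 0 \<longrightarrow> d \<noteq> 0 \<longrightarrow> chi a d \<noteq> 0) \<and>
     (\<forall>a d a' d'. a \<noteq> 0 \<longrightarrow> d \<noteq> 0 \<longrightarrow> a' \<noteq> 0 \<longrightarrow> d' \<noteq> 0 \<longrightarrow>
        chi (a * a') (d * d') = chi a d * chi a' d') \<and>
     (\<exists>n. \<forall>a d. a \<noteq> 0 \<longrightarrow> d \<noteq> 0 \<longrightarrow> close v n a 1 \<longrightarrow> close v n d 1 \<longrightarrow> chi a d = 1)"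

definition conj_s :: "('f \<Rightarrow> 'f \<Rightarrow> 'k) \<Rightarrow> ('f \<Rightarrow> 'f \<Rightarrow> 'k)" where
  "conj_s chi = (\<lambda>a d. chi d a)"

text \<open>Inflation of chi to P via P -> P/U = T.\<close>
fun charP :: "('f \<Rightarrow> 'f \<Rightarrow> 'k) \<Rightarrow> 'f mat2 \<Rightarrow> 'k" where
  "charP chi (a, b, c, d) = chi a d"

definition locally_constant_G ::
  "('f::field \<Rightarrow> int) \<Rightarrow> ('f mat2 \<Rightarrow> 'k) \<Rightarrow> bool" where
  "locally_constant_G v f \<longleftrightarrow>
     (\<forall>g\<in>GL2. \<exists>n. \<forall>h\<in>GL2. mclose v n g h \<longrightarrow> f h = f g)"

text \<open>Functions on G are represented as functions on all matrices vanishing off G.\<close>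
definition Ind :: "('f::field \<Rightarrow> int) \<Rightarrow> ('f \<Rightarrow> 'f \<Rightarrow> 'k::field) \<Rightarrow> ('f mat2 \<Rightarrow> 'k) set" where
  "Ind v chi = {f. locally_constant_G v f \<and> (\<forall>x. x \<notin> GL2 \<longrightarrow> f x = 0) \<and>
                  (\<forall>b\<in>Borel. \<forall>g\<in>GL2. f (mmul b g) = charP chi b * f g)}"

definition rtrans :: "'f::field mat2 \<Rightarrow> ('f mat2 \<Rightarrow> 'k::field) \<Rightarrow> ('f mat2 \<Rightarrow> 'k)" where
  "rtrans g f = (\<lambda>x. if x \<in> GL2 then f (mmul x g) else 0)"

definition smooth_rep ::
  "('f::field \<Rightarrow> int) \<Rightarrow> ('k::field \<Rightarrow> 'w::ab_group_add \<Rightarrow> 'w) \<Rightarrow> ('f mat2 \<Rightarrow> 'w \<Rightarrow> 'w) \<Rightarrow> bool" where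
  "smooth_rep v scale act \<longleftrightarrow>
     vector_space scale \<and>
     (\<forall>g\<in>GL2. Vector_Spaces.linear scale scale (act g)) \<and>
     (\<forall>w. act one2 w = w) \<and>
     (\<forall>g\<in>GL2. \<forall>h\<in>GL2. \<forall>w. act (mmul g h) w = act g (act h w)) \<and>
     (\<forall>w. \<exists>n. \<forall>g\<in>Kcong v n. act g w = w)"

definition HomP ::
  "('f::field \<Rightarrow> int) \<Rightarrow> ('f \<Rightarrow> 'f \<Rightarrow> 'k::field) \<Rightarrow> ('k \<Rightarrow> 'w::ab_group_add \<Rightarrow> 'w) \<Rightarrow>
   ('f mat2 \<Rightarrow> 'w \<Rightarrow> 'w) \<Rightarrow> (('f mat2 \<Rightarrow> 'k) \<Rightarrow> 'w) set" where
  "HomP v chi scale act =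
     {\<phi>. (\<forall>f\<in>Ind v chi. \<forall>g\<in>Ind v chi. \<phi> (\<lambda>x. f x + g x) = \<phi> f + \<phi> g) \<and>
          (\<forall>c. \<forall>f\<in>Ind v chi. \<phi> (\<lambda>x. c * f x) = scale c (\<phi> f)) \<and>
          (\<forall>b\<in>Borel. \<forall>f\<in>Ind v chi. \<phi> (rtrans b f) = act b (\<phi> f))}"

end

theory Submission
  imports Defs
begin

definition bal :: "('f::field \<Rightarrow> int) \<Rightarrow> int \<Rightarrow> 'f \<Rightarrow> bool" where
  "bal v n z \<longleftrightarrow> z = 0 \<or> v z \<ge> n"

lemma close_bal: "close v n x y \<longleftrightarrow> bal v n (x - y)"
  by (auto simp: close_def bal_def)

locale nalf =
  fixes v :: "'f::field \<Rightarrow> int" and p :: nat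
  assumes nalf: "nonarch_local_field v p"
begin

lemmas P = nalf[unfolded nonarch_local_field_def]
lemmas P1 = conjunct1[OF P] and P2 = conjunct1[OF conjunct2[OF P]]
  and P3 = conjunct1[OF conjunct2[OF conjunct2[OF P]]]
  and P4 = conjunct1[OF conjunct2[OF conjunct2[OF conjunct2[OF P]]]]
  and P5 = conjunct1[OF conjunct2[OF conjunct2[OF conjunct2[OF conjunct2[OF P]]]]]
  and P7 = conjunct2[OF conjunct2[OF conjunct2[OF conjunct2[OF conjunct2[OF conjunct2[OF P]]]]]]

lemma vmul: "x \<noteq> 0 \<Longrightarrow> y \<noteq> 0 \<Longrightarrow> v (x * y) = v x + v y"
  using P1 by blast

lemma vadd: "x \<noteq> 0 \<Longrightarrow> y \<noteq> 0 \<Longrightarrow> x + y \<noteq> 0 \<Longrightarrow> v (x + y) \<ge> min (v x) (v y)"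
  using P2 by blast

lemma vsurj: "\<exists>x. x \<noteq> 0 \<and> v x = n"
  using P3 by blast

lemma v1: "v 1 = 0"
  using vmul[of 1 1] by simp

lemma vm1: "v (-1) = 0"
  using vmul[of "-1" "-1"] v1 by simp

lemma vneg: "v (- x) = v x"
proof (cases "x = 0")
  case False
  then show ?thesis using vmul[of "-1" x] vm1 by simp
qed simp

lemma vinv: "x \<noteq> 0 \<Longrightarrow> v (inverse x) = - v x"
  using vmul[of x "inverse x"] v1 by simp

lemma vdiv: "x \<noteq> 0 \<Longrightarrow> y \<noteq> 0 \<Longrightarrow> v (x / y) = v x - v y"
  using vmul[of x "inverse y"] vinv[of y] by (simp add: divide_inverse)

lemma bal_add: "bal v n a \<Longrightarrow> bal v n b \<Longrightarrow> bal v n (a + b)"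
  unfolding bal_def using vadd[of a b] by fastforce

lemma bal_neg: "bal v n (- a) \<longleftrightarrow> bal v n a"
  unfolding bal_def by (auto simp: vneg)

lemma bal_diff: "bal v n a \<Longrightarrow> bal v n b \<Longrightarrow> bal v n (a - b)"
  using bal_add[of n a "-b"] bal_neg[of n b] by simp

lemma bal_mono: "m \<le> n \<Longrightarrow> bal v n a \<Longrightarrow> bal v m a"
  unfolding bal_def by auto

lemma bal_0 [simp]: "bal v n 0"
  unfolding bal_def by auto

lemma bal_mult: "bal v n a \<Longrightarrow> bal v m e \<Longrightarrow> bal v (n + m) (a * e)"
  unfolding bal_def using vmul[of a e] by (cases "a = 0"; cases "e = 0"; auto)

lemma bal_mult_v: "e \<noteq> 0 \<Longrightarrow> bal v (n + v e) (a * e) \<longleftrightarrow> bal v n a"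
  unfolding bal_def using vmul[of a e] by (cases "a = 0"; auto)

lemma close_refl [simp]: "close v n x x"
  by (simp add: close_def)

lemma close_sym: "close v n x y \<Longrightarrow> close v n y x"
  unfolding close_bal using bal_neg[of n "x - y"] by simp

lemma close_trans: "close v n x y \<Longrightarrow> close v n y z \<Longrightarrow> close v n x z"
  unfolding close_bal using bal_add[of n "x - y" "y - z"] by simp

lemma close_mono: "m \<le> n \<Longrightarrow> close v n x y \<Longrightarrow> close v m x y"
  unfolding close_bal using bal_mono by blast

lemma close_add: "close v n x y \<Longrightarrow> close v n x' y' \<Longrightarrow> close v n (x + x') (y + y')"
  unfolding close_bal using bal_add[of n "x - y" "x' - y'"] by (simp add: algebra_simps)

lemma close_mult: "close v n x y \<Longrightarrow> bal v m e \<Longrightarrow> close v (n + m) (x * e) (y * e)"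
  unfolding close_bal using bal_mult[of n "x - y" m e] by (simp add: algebra_simps)

lemma close_shift: "close v n (x + t) (y + t) \<longleftrightarrow> close v n x y"
  unfolding close_bal by simp

lemma residue: "\<exists>R. finite R \<and> (\<forall>r\<in>R. bal v 0 r) \<and> (\<forall>a. bal v 0 a \<longrightarrow> (\<exists>r\<in>R. close v 1 a r))"
proof -
  obtain R where R: "finite R" "\<forall>a. (a = 0 \<or> v a \<ge> 0) \<longrightarrow> (\<exists>r\<in>R. close v 1 a r)"
    using P5 by blast
  show ?thesis
  proof (intro exI conjI)
    show "finite {r\<in>R. bal v 0 r}" using R by simp
    show "\<forall>r\<in>{r\<in>R. bal v 0 r}. bal v 0 r" by simp
    show "\<forall>a. bal v 0 a \<longrightarrow> (\<exists>r\<in>{r\<in>R. bal v 0 r}. close v 1 a r)"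
    proof (intro allI impI)
      fix a assume a: "bal v 0 a"
      then obtain r where r: "r \<in> R" "close v 1 a r" using R unfolding bal_def by blast
      have "bal v 0 (a - r)" using r(2) close_mono[of 0 1] unfolding close_bal by auto
      then have "bal v 0 r" using bal_diff[OF a, of "a - r"] by simp
      then show "\<exists>r\<in>{r\<in>R. bal v 0 r}. close v 1 a r" using r by auto
    qed
  qed
qed

lemma char_p: "bal v 1 (of_nat p)"
  using P7 unfolding close_bal by simp

end

context nalf begin

lemma ball_decomp:
  "\<exists>C. finite C \<and> (\<forall>c'\<in>C. close v n c' c) \<and> (\<forall>y. close v n y c \<longrightarrow> (\<exists>c'\<in>C. close v (n+1) y c'))"
proof -
  obtain R where R: "finite R" "\<forall>r\<in>R. bal v 0 r" "\<forall>a. bal v 0 a \<longrightarrow> (\<exists>r\<in>R. close v 1 a r)"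
    using residue by blast
  obtain e where e: "e \<noteq> 0" "v e = n" using vsurj by blast
  have be: "bal v n e" using e unfolding bal_def by simp
  show ?thesis
  proof (intro exI conjI ballI allI impI)
    show "finite ((\<lambda>r. c + r * e) ` R)" using R by simp
  next
    fix c' assume "c' \<in> (\<lambda>r. c + r * e) ` R"
    then obtain r where r: "r \<in> R" "c' = c + r * e" by blast
    have "bal v (0 + n) (r * e)" using bal_mult[of 0 r n e] R(2) r(1) be by simp
    then show "close v n c' c" unfolding close_bal r by simp
  next
    fix y assume y: "close v n y c"
    define a where "a = (y - c) / e"
    have ae: "a * e = y - c" unfolding a_def using e by simp
    have "bal v (0 + v e) (a * e)" using y e unfolding ae close_bal by simp
    then have "bal v 0 a" using bal_mult_v[OF e(1)] by blast
    then obtain r where r: "r \<in> R" "close v 1 a r" using R(3) by blast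
    have "bal v (1 + v e) ((a - r) * e)" using bal_mult_v[OF e(1), of 1 "a - r"] r(2) unfolding close_bal by simp
    moreover have "(a - r) * e = y - (c + r * e)" using ae by (simp add: algebra_simps)
    ultimately have "close v (n + 1) y (c + r * e)" unfolding close_bal using e by (simp add: add.commute)
    then show "\<exists>c'\<in>(\<lambda>r. c + r * e) ` R. close v (n+1) y c'" using r(1) by blast
  qed
qed

lemma cover:
  "\<exists>C. finite C \<and> (\<forall>y. close v m y 0 \<longrightarrow> (\<exists>c\<in>C. close v (m + int k) y c))"
proof (induction k)
  case 0
  then show ?case by (intro exI[of _ "{0}"]) auto
next
  case (Suc k)
  then obtain C where C: "finite C" "\<forall>y. close v m y 0 \<longrightarrow> (\<exists>c\<in>C. close v (m + int k) y c)" by blast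
  have "\<forall>c. \<exists>D. finite D \<and> (\<forall>y. close v (m + int k) y c \<longrightarrow> (\<exists>c'\<in>D. close v (m + int k + 1) y c'))"
    using ball_decomp by blast
  then obtain G where G0: "\<forall>c. finite (G c) \<and> (\<forall>y. close v (m + int k) y c \<longrightarrow> (\<exists>c'\<in>G c. close v (m + int k + 1) y c'))"
    by (rule choice[THEN exE])
  have G: "\<And>c. finite (G c)" "\<And>c y. close v (m + int k) y c \<Longrightarrow> (\<exists>c'\<in>G c. close v (m + int k + 1) y c')"
    using G0 by blast+
  show ?case
  proof (intro exI conjI allI impI)
    show "finite (\<Union>(G ` C))" using C(1) G(1) by simp
    fix y assume "close v m y 0"
    then obtain c where c: "c \<in> C" "close v (m + int k) y c" using C(2) by blast
    then obtain c' where c': "c' \<in> G c" "close v (m + int k + 1) y c'" using G(2) by blast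
    have e: "m + int (Suc k) = m + int k + 1" by simp
    have "close v (m + int (Suc k)) y c'" unfolding e by (rule c'(2))
    moreover have "c' \<in> \<Union>(G ` C)" using c(1) c'(1) by blast
    ultimately show "\<exists>c\<in>\<Union>(G ` C). close v (m + int (Suc k)) y c"
      by (rule bexI)
  qed
qed

lemma unif:
  fixes \<psi> :: "'f \<Rightarrow> 'k::zero"
  assumes lc: "\<forall>x. \<exists>n. \<forall>y. close v n x y \<longrightarrow> \<psi> y = \<psi> x"
    and supp: "\<forall>y. \<not> close v m y 0 \<longrightarrow> \<psi> y = 0"
  shows "\<exists>n. \<forall>x y. close v n x y \<longrightarrow> \<psi> x = \<psi> y"
proof -
  define good where "good c n \<longleftrightarrow> (\<exists>N. \<forall>x y. close v n x c \<longrightarrow> close v n y c \<longrightarrow> close v N x y \<longrightarrow> \<psi> x = \<psi> y)" for c n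
  have step: "\<exists>c'. close v n c' c \<and> \<not> good c' (n+1)" if ng: "\<not> good c n" for c n
  proof (rule ccontr)
    assume "\<not> (\<exists>c'. close v n c' c \<and> \<not> good c' (n+1))"
    then have allg: "\<And>c'. close v n c' c \<Longrightarrow> good c' (n+1)" by blast
    obtain C where C: "finite C" "\<forall>c'\<in>C. close v n c' c" "\<forall>y. close v n y c \<longrightarrow> (\<exists>c'\<in>C. close v (n+1) y c')"
      using ball_decomp[of n c] by (elim exE conjE) blast
    have "\<forall>c'\<in>C. \<exists>N. \<forall>x y. close v (n+1) x c' \<longrightarrow> close v (n+1) y c' \<longrightarrow> close v N x y \<longrightarrow> \<psi> x = \<psi> y"
      using allg C(2) unfolding good_def by blast
    then obtain Nf where Nf0: "\<forall>c'\<in>C. \<forall>x y. close v (n+1) x c' \<longrightarrow> close v (n+1) y c' \<longrightarrow> close v (Nf c') x y \<longrightarrow> \<psi> x = \<psi> y"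
      by (rule bchoice[THEN exE])
    have Nf: "\<And>c' x y. c' \<in> C \<Longrightarrow> close v (n+1) x c' \<Longrightarrow> close v (n+1) y c' \<Longrightarrow> close v (Nf c') x y \<Longrightarrow> \<psi> x = \<psi> y"
      using Nf0 by blast
    define N0 where "N0 = max (n+1) (Max (insert 0 (Nf ` C)))"
    have N0a: "n + 1 \<le> N0" unfolding N0_def by (rule max.cobounded1)
    have N0b: "Nf c' \<le> N0" if "c' \<in> C" for c'
    proof -
      have "Nf c' \<le> Max (insert 0 (Nf ` C))" by (rule Max_ge) (use C(1) that in auto)
      then show ?thesis unfolding N0_def by (rule le_max_iff_disj[THEN iffD2, OF disjI2])
    qed
    have "good c n" unfolding good_def
    proof (intro exI[of _ N0] allI impI)
      fix x y assume x: "close v n x c" and y: "close v n y c" and xy: "close v N0 x y"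
      obtain c' where c': "c' \<in> C" "close v (n+1) x c'" using C(3) x by blast
      have "close v (n+1) x y" by (rule close_mono[OF N0a xy])
      then have yc: "close v (n+1) y c'" using close_trans[OF close_sym c'(2)] by blast
      have "close v (Nf c') x y" by (rule close_mono[OF N0b[OF c'(1)] xy])
      then show "\<psi> x = \<psi> y" using Nf[OF c'(1) c'(2) yc] by blast
    qed
    then show False using ng by blast
  qed
  show ?thesis
  proof (cases "good 0 m")
    case True
    then obtain N where N: "\<And>x y. close v m x 0 \<Longrightarrow> close v m y 0 \<Longrightarrow> close v N x y \<Longrightarrow> \<psi> x = \<psi> y"
      unfolding good_def by blast
    show ?thesis
    proof (intro exI[of _ "max N m"] allI impI)
      fix x y assume xy: "close v (max N m) x y"
      have xyN: "close v N x y" and xym: "close v m x y" using close_mono[OF _ xy] by auto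
      show "\<psi> x = \<psi> y"
      proof (cases "close v m x 0")
        case True
        then have "close v m y 0" using close_trans[OF close_sym[OF xym]] by blast
        then show ?thesis using N True xyN by blast
      next
        case False
        then have "\<not> close v m y 0" using close_trans[OF xym] by blast
        then show ?thesis using False supp by simp
      qed
    qed
  next
    case False
    define c where "c = rec_nat 0 (\<lambda>k ck. SOME c'. close v (m + int k) c' ck \<and> \<not> good c' (m + int k + 1))"
    have c0: "c 0 = 0" unfolding c_def by simp
    have cS: "c (Suc k) = (SOME c'. close v (m + int k) c' (c k) \<and> \<not> good c' (m + int k + 1))" for k
      unfolding c_def by simp
    have inv: "\<not> good (c k) (m + int k) \<and> close v (m + int k) (c (Suc k)) (c k)" for k
    proof (induction k)
      case 0
      have ex: "\<exists>c'. close v (m + int 0) c' (c 0) \<and> \<not> good c' (m + int 0 + 1)" using step[of 0 m] False c0 by simp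
      show ?case using someI_ex[OF ex] cS[of 0] False c0 by simp
    next
      case (Suc k)
      have ex0: "\<exists>c'. close v (m + int k) c' (c k) \<and> \<not> good c' (m + int k + 1)"
        using step[OF conjunct1[OF Suc.IH]] .
      have ng: "\<not> good (c (Suc k)) (m + int (Suc k))"
      proof -
        have e: "m + int (Suc k) = m + int k + 1" by simp
        show ?thesis unfolding e cS[of k] using someI_ex[OF ex0] by (rule conjunct2)
      qed
      have ex: "\<exists>c'. close v (m + int (Suc k)) c' (c (Suc k)) \<and> \<not> good c' (m + int (Suc k) + 1)"
        using step[OF ng] .
      show ?case using someI_ex[OF ex] cS[of "Suc k"] ng by simp
    qed
    have chain: "close v (m + int k) (c (k + i)) (c k)" for k i
    proof (induction i)
      case 0 then show ?case by simp
    next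
      case (Suc i)
      have "close v (m + int (k + i)) (c (Suc (k + i))) (c (k + i))" using inv by blast
      then have "close v (m + int k) (c (Suc (k + i))) (c (k + i))" by (rule close_mono[rotated]) simp
      from close_trans[OF this Suc] show ?case by simp
    qed
    have "\<forall>n. \<exists>N. \<forall>i\<ge>N. \<forall>j\<ge>N. close v n (c i) (c j)"
    proof
      fix n
      show "\<exists>N. \<forall>i\<ge>N. \<forall>j\<ge>N. close v n (c i) (c j)"
      proof (intro exI[of _ "nat (n - m)"] allI impI)
        fix i j assume ij: "nat (n - m) \<le> i" "nat (n - m) \<le> j"
        let ?N = "nat (n - m)"
        have "close v (m + int ?N) (c (?N + (i - ?N))) (c ?N)" by (rule chain)
        then have ci: "close v (m + int ?N) (c i) (c ?N)" using ij by simp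
        have "close v (m + int ?N) (c (?N + (j - ?N))) (c ?N)" by (rule chain)
        then have cj: "close v (m + int ?N) (c j) (c ?N)" using ij by simp
        have "close v (m + int ?N) (c i) (c j)" using close_trans[OF ci close_sym[OF cj]] .
        then show "close v n (c i) (c j)" using close_mono[of n "m + int ?N"] by simp
      qed
    qed
    then obtain L where L: "\<forall>n. \<exists>N. \<forall>i\<ge>N. close v n (c i) L" using P4 by blast
    obtain n0 where n0: "\<And>y. close v n0 L y \<Longrightarrow> \<psi> y = \<psi> L" using lc by blast
    obtain N1 where N1: "\<And>i. i \<ge> N1 \<Longrightarrow> close v n0 (c i) L" using L by blast
    define i where "i = max N1 (nat (n0 - m))"
    have ci: "close v n0 (c i) L" using N1 unfolding i_def by simp
    have mi: "n0 \<le> m + int i" unfolding i_def by simp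
    have "good (c i) (m + int i)" unfolding good_def
    proof (intro exI[of _ 0] allI impI)
      fix x y assume x: "close v (m + int i) x (c i)" and y: "close v (m + int i) y (c i)"
      have "close v n0 x (c i)" "close v n0 y (c i)" using close_mono[OF mi] x y by auto
      then have "close v n0 L x" "close v n0 L y" using close_sym[OF close_trans[OF _ ci]] by blast+
      then show "\<psi> x = \<psi> y" using n0 by metis
    qed
    then show ?thesis using inv by blast
  qed
qed

end

lemma frob:
  assumes "CHAR('k::field) = p" "prime p"
  shows "(monom (1::'k) 1 - 1) ^ p = monom 1 p - 1"
proof -
  let ?X = "monom (1::'k) 1"
  let ?f = "\<lambda>k. of_nat (p choose k) * ?X^k * (-1 :: 'k poly)^(p-k)"
  have b: "(?X + (-1))^p = (\<Sum>k\<le>p. ?f k)" by (rule binomial_ring)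
  have cp: "CHAR('k poly) = p" using assms by simp
  have p0: "p \<noteq> 0" using assms(2) by auto
  have mid: "?f k = 0" if "k \<in> {1..<p}" for k
  proof -
    have "p dvd (p choose k)" using dvd_choose_prime[of k p] that p0 assms(2) by auto
    then have "(of_nat (p choose k) :: 'k poly) = 0" using of_nat_eq_0_iff_char_dvd cp by metis
    then show ?thesis by simp
  qed
  have s: "{..p} = insert 0 (insert p {1..<p})" by auto
  have "(\<Sum>k\<le>p. ?f k) = ?f 0 + (?f p + (\<Sum>k\<in>{1..<p}. ?f k))"
    unfolding s using p0 by (simp add: sum.insert)
  also have "(\<Sum>k\<in>{1..<p}. ?f k) = 0" using mid by (rule sum.neutral[OF ballI])
  also have "?f 0 = (-1)^p" by simp
  also have "(-1 :: 'k poly)^p = -1"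
    using minus_power_prime_CHAR[of p "1 :: 'k poly"] cp assms(2) by simp
  also have "?f p = ?X ^ p" by simp
  also have "?X ^ p = monom 1 p" by (simp add: monom_power)
  finally show ?thesis using b by simp
qed

definition Dl :: "'f::field \<Rightarrow> ('f \<Rightarrow> 'k::field) \<Rightarrow> ('f \<Rightarrow> 'k)" where
  "Dl t \<psi> = (\<lambda>x. \<psi> (x + t) - \<psi> x)"

definition Ev :: "('f::field \<Rightarrow> 'k::field) \<Rightarrow> 'f \<Rightarrow> 'f \<Rightarrow> 'k poly \<Rightarrow> 'k" where
  "Ev \<psi> x t P = (\<Sum>i\<le>degree P. coeff P i * \<psi> (x + of_nat i * t))"

lemma Ev_N: "degree P \<le> N \<Longrightarrow> Ev \<psi> x t P = (\<Sum>i\<le>N. coeff P i * \<psi> (x + of_nat i * t))"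
  unfolding Ev_def
  by (rule sum.mono_neutral_left) (auto simp: coeff_eq_0)

lemma Ev_diff: "Ev \<psi> x t (P - Q) = Ev \<psi> x t P - Ev \<psi> x t Q"
proof -
  let ?N = "max (degree P) (degree Q)"
  have "Ev \<psi> x t (P - Q) = (\<Sum>i\<le>?N. coeff (P - Q) i * \<psi> (x + of_nat i * t))"
    by (rule Ev_N) (rule degree_diff_le; simp)
  also have "\<dots> = (\<Sum>i\<le>?N. coeff P i * \<psi> (x + of_nat i * t)) - (\<Sum>i\<le>?N. coeff Q i * \<psi> (x + of_nat i * t))"
    by (simp add: sum_subtractf[symmetric] left_diff_distrib)
  also have "\<dots> = Ev \<psi> x t P - Ev \<psi> x t Q"
  proof -
    have "Ev \<psi> x t P = (\<Sum>i\<le>?N. coeff P i * \<psi> (x + of_nat i * t))" by (rule Ev_N) simp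
    moreover have "Ev \<psi> x t Q = (\<Sum>i\<le>?N. coeff Q i * \<psi> (x + of_nat i * t))" by (rule Ev_N) simp
    ultimately show ?thesis by simp
  qed
  finally show ?thesis .
qed

lemma Ev_monom:
  fixes \<psi> :: "'a::field \<Rightarrow> 'b::field"
  shows "Ev \<psi> x t (monom 1 j) = \<psi> (x + of_nat j * t)"
proof -
  have "\<And>i. coeff (monom (1::'b) j) i * \<psi> (x + of_nat i * t) = (if i = j then \<psi> (x + of_nat i * t) else 0)"
    by (auto simp: coeff_monom)
  then show ?thesis unfolding Ev_def by (simp add: degree_monom_eq)
qed

lemma Dl_pow:
  fixes \<psi> :: "'a::field \<Rightarrow> 'b::field"
  shows "(Dl t ^^ m) \<psi> (x + of_nat j * t) = Ev \<psi> x t (monom 1 j * (monom 1 1 - 1) ^ m)"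
proof (induction m arbitrary: j)
  case 0
  then show ?case by (simp add: Ev_monom)
next
  case (Suc m)
  have e: "x + of_nat j * t + t = x + of_nat (Suc j) * t" by (simp add: algebra_simps)
  have "(Dl t ^^ Suc m) \<psi> (x + of_nat j * t) = (Dl t ^^ m) \<psi> (x + of_nat (Suc j) * t) - (Dl t ^^ m) \<psi> (x + of_nat j * t)"
    by (simp add: Dl_def e)
  also have "\<dots> = Ev \<psi> x t (monom 1 (Suc j) * (monom 1 1 - 1) ^ m - monom 1 j * (monom 1 1 - 1) ^ m)"
    by (simp only: Suc.IH Ev_diff)
  also have "monom 1 (Suc j) * (monom 1 1 - 1) ^ m - monom 1 j * (monom 1 1 - 1) ^ m
      = monom (1::'b) j * (monom 1 1 - 1) ^ Suc m"
    by (simp add: algebra_simps mult_monom)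
  finally show ?case .
qed

lemma Dl_p:
  assumes "CHAR('k::field) = p" "prime p"
  shows "(Dl t ^^ p) (\<psi> :: 'f::field \<Rightarrow> 'k) x = \<psi> (x + of_nat p * t) - \<psi> x"
proof -
  have "(Dl t ^^ p) \<psi> x = (Dl t ^^ p) \<psi> (x + of_nat 0 * t)" by simp
  also have "\<dots> = Ev \<psi> x t (monom 1 0 * (monom 1 1 - 1) ^ p)" by (rule Dl_pow)
  also have "\<dots> = Ev \<psi> x t (monom 1 p - monom 1 0)" using frob[OF assms] by simp
  also have "\<dots> = \<psi> (x + of_nat p * t) - \<psi> x" by (simp only: Ev_diff Ev_monom) simp
  finally show ?thesis .
qed

definition invc :: "('f::field \<Rightarrow> int) \<Rightarrow> int \<Rightarrow> ('f \<Rightarrow> 'k) \<Rightarrow> bool" where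
  "invc v n \<psi> \<longleftrightarrow> (\<forall>x y. close v n x y \<longrightarrow> \<psi> x = \<psi> y)"

definition suppc :: "('f::field \<Rightarrow> int) \<Rightarrow> int \<Rightarrow> ('f \<Rightarrow> 'k::zero) \<Rightarrow> bool" where
  "suppc v m \<psi> \<longleftrightarrow> (\<forall>y. \<not> close v m y 0 \<longrightarrow> \<psi> y = 0)"

definition ind :: "('f::field \<Rightarrow> int) \<Rightarrow> int \<Rightarrow> 'f \<Rightarrow> 'k::{zero,one}" where
  "ind v m = (\<lambda>x. if close v m x 0 then 1 else 0)"

lemma exstep: "P 0 \<Longrightarrow> \<not> P n \<Longrightarrow> \<exists>k<n. P k \<and> \<not> P (Suc k)"
proof (induction n)
  case 0 then show ?case by simp
next
  case (Suc n)
  then show ?case by (cases "P n") (auto intro: less_SucI)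
qed

locale vsp = nalf v p for v :: "'f::field \<Rightarrow> int" and p +
  fixes V :: "('f \<Rightarrow> 'k::field) set"
  assumes charp: "CHAR('k) = p" and primep: "prime p"
  and Vadd: "\<And>\<psi>1 \<psi>2. \<psi>1 \<in> V \<Longrightarrow> \<psi>2 \<in> V \<Longrightarrow> (\<lambda>x. \<psi>1 x + \<psi>2 x) \<in> V"
  and Vscal: "\<And>\<psi> c. \<psi> \<in> V \<Longrightarrow> (\<lambda>x. c * \<psi> x) \<in> V"
  and Vtr: "\<And>\<psi> t. \<psi> \<in> V \<Longrightarrow> (\<lambda>x. \<psi> (x + t)) \<in> V"
  and Vdil: "\<And>\<psi> a. \<psi> \<in> V \<Longrightarrow> a \<noteq> 0 \<Longrightarrow> (\<lambda>x. \<psi> (a * x)) \<in> V"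
begin

lemma Dl_V: "\<psi> \<in> V \<Longrightarrow> Dl t \<psi> \<in> V"
proof -
  assume a: "\<psi> \<in> V"
  have eq: "Dl t \<psi> = (\<lambda>x. \<psi> (x + t) + (-1) * \<psi> x)" by (simp add: Dl_def)
  show ?thesis unfolding eq by (rule Vadd[OF Vtr[OF a] Vscal[OF a]])
qed

lemma Dl_inv: "invc v n \<psi> \<Longrightarrow> invc v n (Dl t \<psi>)"
  unfolding invc_def Dl_def using close_shift by metis

lemma Dl_supp: "suppc v m \<psi> \<Longrightarrow> bal v m t \<Longrightarrow> suppc v m (Dl t \<psi>)"
  unfolding suppc_def Dl_def
proof (intro allI impI)
  fix y assume s: "\<forall>y. \<not> close v m y 0 \<longrightarrow> \<psi> y = 0" and t: "bal v m t" and y: "\<not> close v m y 0"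
  have "\<not> close v m (y + t) 0"
  proof
    assume "close v m (y + t) 0"
    then have "bal v m (y + t)" unfolding close_bal by simp
    then have "bal v m (y + t - t)" by (rule bal_diff[OF _ t])
    then show False using y unfolding close_bal by simp
  qed
  then show "\<psi> (y + t) - \<psi> y = 0" using s y by simp
qed

lemma Dl_T: "(\<forall>x. \<psi> (x + s) = \<psi> x) \<Longrightarrow> (\<forall>x. Dl t \<psi> (x + s) = Dl t \<psi> x)"
  unfolding Dl_def by (metis add.commute add.left_commute)

lemma Dlk:
  assumes "\<psi> \<in> V" "invc v n \<psi>" "suppc v m \<psi>" "bal v m t" "\<forall>s\<in>T. \<forall>x. \<psi> (x + s) = \<psi> x"
  shows "(Dl t ^^ k) \<psi> \<in> V \<and> invc v n ((Dl t ^^ k) \<psi>) \<and> suppc v m ((Dl t ^^ k) \<psi>) \<and>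
     (\<forall>s\<in>T. \<forall>x. (Dl t ^^ k) \<psi> (x + s) = (Dl t ^^ k) \<psi> x)"
proof (induction k)
  case 0 then show ?case using assms by simp
next
  case (Suc k)
  then have h: "(Dl t ^^ k) \<psi> \<in> V" "invc v n ((Dl t ^^ k) \<psi>)" "suppc v m ((Dl t ^^ k) \<psi>)"
     "\<forall>s\<in>T. \<forall>x. (Dl t ^^ k) \<psi> (x + s) = (Dl t ^^ k) \<psi> x" by blast+
  have "\<forall>s\<in>T. \<forall>x. Dl t ((Dl t ^^ k) \<psi>) (x + s) = Dl t ((Dl t ^^ k) \<psi>) x"
    using Dl_T h(4) by blast
  then show ?case using Dl_V[OF h(1)] Dl_inv[OF h(2)] Dl_supp[OF h(3) assms(4)] by simp
qed

lemma fix_step: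
  assumes "finite T"
  shows "\<psi> \<in> V \<Longrightarrow> \<psi> \<noteq> (\<lambda>x. 0) \<Longrightarrow> invc v j \<psi> \<Longrightarrow> suppc v m \<psi> \<Longrightarrow> m \<le> j - 1 \<Longrightarrow>
    (\<forall>t\<in>T. bal v (j - 1) t) \<Longrightarrow>
    \<exists>\<psi>'\<in>V. \<psi>' \<noteq> (\<lambda>x. 0) \<and> invc v j \<psi>' \<and> suppc v m \<psi>' \<and> (\<forall>t\<in>T. \<forall>x. \<psi>' (x + t) = \<psi>' x)"
  using assms
proof (induction T rule: finite_induct)
  case empty
  then show ?case by blast
next
  case (insert t T)
  then obtain \<psi>' where p': "\<psi>' \<in> V" "\<psi>' \<noteq> (\<lambda>x. 0)" "invc v j \<psi>'" "suppc v m \<psi>'"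
    "\<forall>s\<in>T. \<forall>x. \<psi>' (x + s) = \<psi>' x" by auto
  have tj: "bal v (j - 1) t" using insert by simp
  have tm: "bal v m t" using bal_mono[OF insert.prems(5) tj] .
  have pt: "bal v j (of_nat p * t)" using bal_mult[OF char_p tj] by simp
  have "(Dl t ^^ p) \<psi>' = (\<lambda>x. 0)"
  proof
    fix x
    have "close v j (x + of_nat p * t) x" unfolding close_bal using pt by simp
    then have "\<psi>' (x + of_nat p * t) = \<psi>' x" using p'(3) unfolding invc_def by blast
    then show "(Dl t ^^ p) \<psi>' x = 0" using Dl_p[OF charp primep, of t \<psi>' x] by simp
  qed
  then obtain k where k: "(Dl t ^^ k) \<psi>' \<noteq> (\<lambda>x. 0)" "(Dl t ^^ Suc k) \<psi>' = (\<lambda>x. 0)"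
    using exstep[of "\<lambda>k. (Dl t ^^ k) \<psi>' \<noteq> (\<lambda>x. 0)" p] p'(2) by auto
  let ?\<psi> = "(Dl t ^^ k) \<psi>'"
  have props: "?\<psi> \<in> V \<and> invc v j ?\<psi> \<and> suppc v m ?\<psi> \<and> (\<forall>s\<in>T. \<forall>x. ?\<psi> (x + s) = ?\<psi> x)"
    by (rule Dlk[OF p'(1) p'(3) p'(4) tm p'(5)])
  have "\<forall>x. ?\<psi> (x + t) = ?\<psi> x"
  proof
    fix x
    have "Dl t ?\<psi> x = 0" using k(2) by (metis funpow.simps(2) o_apply)
    then show "?\<psi> (x + t) = ?\<psi> x" unfolding Dl_def by simp
  qed
  then show ?case using props k(1) by blast
qed

lemma descend:
  assumes "\<psi> \<in> V" "\<psi> \<noteq> (\<lambda>x. 0)" "invc v j \<psi>" "suppc v m \<psi>" "m < j"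
  shows "\<exists>\<psi>'\<in>V. \<psi>' \<noteq> (\<lambda>x. 0) \<and> invc v (j - 1) \<psi>' \<and> suppc v m \<psi>'"
proof -
  obtain R where R: "finite R" "\<forall>r\<in>R. bal v 0 r" "\<forall>a. bal v 0 a \<longrightarrow> (\<exists>r\<in>R. close v 1 a r)"
    using residue by blast
  obtain e where e: "e \<noteq> 0" "v e = j - 1" using vsurj by blast
  have be: "bal v (j - 1) e" using e unfolding bal_def by simp
  let ?T = "(\<lambda>r. r * e) ` R"
  have Tb: "\<forall>t\<in>?T. bal v (j - 1) t" using bal_mult[of 0 _ "j - 1" e] R(2) be by auto
  obtain \<psi>' where p': "\<psi>' \<in> V" "\<psi>' \<noteq> (\<lambda>x. 0)" "invc v j \<psi>'" "suppc v m \<psi>'"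
      "\<forall>t\<in>?T. \<forall>x. \<psi>' (x + t) = \<psi>' x"
    using fix_step[of ?T \<psi> j m] assms R(1) Tb by auto
  have "invc v (j - 1) \<psi>'" unfolding invc_def
  proof (intro allI impI)
    fix x y assume xy: "close v (j - 1) x y"
    define d where "d = y - x"
    have bd: "bal v (j - 1) d" using xy close_sym unfolding close_bal d_def by blast
    define a where "a = d / e"
    have ae: "a * e = d" unfolding a_def using e by simp
    have "bal v (0 + v e) (a * e)" using bd e ae by simp
    then have "bal v 0 a" using bal_mult_v[OF e(1)] by blast
    then obtain r where r: "r \<in> R" "close v 1 a r" using R(3) by blast
    have "bal v (1 + v e) ((a - r) * e)" using bal_mult_v[OF e(1), of 1 "a - r"] r(2) unfolding close_bal by simp
    then have bs: "bal v j (d - r * e)" using ae e by (simp add: algebra_simps)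
    have "close v j y (x + r * e)" unfolding close_bal d_def using bs unfolding d_def by (simp add: algebra_simps)
    then have "\<psi>' y = \<psi>' (x + r * e)" using p'(3) unfolding invc_def by blast
    also have "\<dots> = \<psi>' x" using p'(5) r(1) by blast
    finally show "\<psi>' x = \<psi>' y" by simp
  qed
  then show ?thesis using p' by blast
qed

lemma socle:
  assumes "\<psi> \<in> V" "\<psi> \<noteq> (\<lambda>x. 0)" "invc v n \<psi>" "suppc v m \<psi>"
  shows "ind v m \<in> V"
proof -
  have main: "\<forall>j \<psi>. j = m + int k \<longrightarrow> \<psi> \<in> V \<longrightarrow> \<psi> \<noteq> (\<lambda>x. 0) \<longrightarrow> invc v j \<psi> \<longrightarrow> suppc v m \<psi> \<longrightarrow>
     (\<exists>\<psi>'\<in>V. \<psi>' \<noteq> (\<lambda>x. 0) \<and> invc v m \<psi>' \<and> suppc v m \<psi>')" for k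
  proof (induction k)
    case 0 then show ?case by auto
  next
    case (Suc k)
    show ?case
    proof (intro allI impI)
      fix j \<psi> assume h: "j = m + int (Suc k)" "\<psi> \<in> V" "\<psi> \<noteq> (\<lambda>x. 0)" "invc v j \<psi>" "suppc v m \<psi>"
      obtain \<psi>' where "\<psi>' \<in> V" "\<psi>' \<noteq> (\<lambda>x. 0)" "invc v (j - 1) \<psi>'" "suppc v m \<psi>'"
        using descend[OF h(2-5)] h(1) by auto
      moreover have "j - 1 = m + int k" using h(1) by simp
      ultimately show "\<exists>\<psi>'\<in>V. \<psi>' \<noteq> (\<lambda>x. 0) \<and> invc v m \<psi>' \<and> suppc v m \<psi>'" using Suc by blast
    qed
  qed
  let ?n = "max n m"
  have "invc v ?n \<psi>" using assms(3) close_mono[of n ?n] unfolding invc_def by simp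
  then obtain \<psi>' where p': "\<psi>' \<in> V" "\<psi>' \<noteq> (\<lambda>x. 0)" "invc v m \<psi>'" "suppc v m \<psi>'"
    using main[of "nat (?n - m)"] assms by auto
  have eq: "\<psi>' = (\<lambda>x. \<psi>' 0 * ind v m x)"
  proof
    fix x
    show "\<psi>' x = \<psi>' 0 * ind v m x"
      using p'(3,4) unfolding invc_def suppc_def ind_def by auto
  qed
  have "\<psi>' 0 \<noteq> 0"
  proof
    assume "\<psi>' 0 = 0"
    then have "\<psi>' = (\<lambda>x. 0)" using eq by simp
    then show False using p'(2) by simp
  qed
  then have "ind v m = (\<lambda>x. inverse (\<psi>' 0) * \<psi>' x)"
  proof -
    assume nz: "\<psi>' 0 \<noteq> 0"
    show ?thesis
    proof
      fix x
      have "\<psi>' x = \<psi>' 0 * ind v m x" using fun_cong[OF eq, of x] by simp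
      then show "ind v m x = inverse (\<psi>' 0) * \<psi>' x" using nz by simp
    qed
  qed
  then show ?thesis using Vscal[OF p'(1)] by simp
qed

lemma gen:
  assumes "ind v m0 \<in> V"
  shows "invc v n \<psi> \<Longrightarrow> suppc v m \<psi> \<Longrightarrow> \<psi> \<in> V"
proof -
  have indj: "ind v j \<in> V" for j
  proof -
    obtain a where a: "a \<noteq> 0" "v a = m0 - j" using vsurj by blast
    have eqj: "(\<lambda>x. ind v m0 (a * x)) = ind v j"
    proof
      fix x
      have "bal v m0 (a * x) \<longleftrightarrow> bal v j x"
        using bal_mult_v[OF a(1), of j x] a(2) by (simp add: mult.commute)
      then show "ind v m0 (a * x) = ind v j x" unfolding ind_def close_bal by simp
    qed
    show ?thesis using Vdil[OF assms a(1)] by (simp only: eqj)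
  qed
  have ballc: "(\<lambda>x. ind v j (x + (- c))) \<in> V" for j c using Vtr[OF indj] .
  have zero: "(\<lambda>x. 0) \<in> V" using Vscal[OF assms, of 0] by simp
  have fin: "finite C \<Longrightarrow> \<forall>\<psi>. invc v n \<psi> \<longrightarrow> (\<forall>y. \<psi> y \<noteq> 0 \<longrightarrow> (\<exists>c\<in>C. close v n y c)) \<longrightarrow> \<psi> \<in> V" for C n
  proof (induction C rule: finite_induct)
    case empty
    then show ?case
    proof (intro allI impI)
      fix \<psi> :: "'f \<Rightarrow> 'k" assume "\<forall>y. \<psi> y \<noteq> 0 \<longrightarrow> (\<exists>c\<in>{}. close v n y c)"
      then have "\<psi> = (\<lambda>x. 0)" by auto
      then show "\<psi> \<in> V" using zero by simp
    qed
  next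
    case (insert c C)
    show ?case
    proof (intro allI impI)
      fix \<psi> :: "'f \<Rightarrow> 'k" assume i: "invc v n \<psi>" and s: "\<forall>y. \<psi> y \<noteq> 0 \<longrightarrow> (\<exists>c'\<in>insert c C. close v n y c')"
      let ?b = "\<lambda>x. ind v n (x + (- c)) :: 'k"
      have bb: "?b x = (if close v n x c then 1 else 0)" for x
        unfolding ind_def close_bal by simp
      define \<psi>1 where "\<psi>1 = (\<lambda>x. \<psi> x + (- \<psi> c) * ?b x)"
      have i1: "invc v n \<psi>1"
        unfolding invc_def \<psi>1_def bb
      proof (intro allI impI)
        fix x y assume xy: "close v n x y"
        have "close v n x c \<longleftrightarrow> close v n y c"
          using close_trans[OF xy] close_trans[OF close_sym[OF xy]] by blast
        then show "\<psi> x + - \<psi> c * (if close v n x c then 1 else 0) = \<psi> y + - \<psi> c * (if close v n y c then 1 else 0)"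
          using i xy unfolding invc_def by simp
      qed
      have s1: "\<forall>y. \<psi>1 y \<noteq> 0 \<longrightarrow> (\<exists>c'\<in>C. close v n y c')"
      proof (intro allI impI)
        fix y assume y: "\<psi>1 y \<noteq> 0"
        show "\<exists>c'\<in>C. close v n y c'"
        proof (cases "close v n y c")
          case True
          then have "\<psi> y = \<psi> c" using i unfolding invc_def by blast
          then have "\<psi>1 y = 0" unfolding \<psi>1_def bb using True by simp
          then show ?thesis using y by simp
        next
          case False
          then have "\<psi> y \<noteq> 0" using y unfolding \<psi>1_def bb by simp
          then show ?thesis using s False by blast
        qed
      qed
      have "\<psi>1 \<in> V" using insert.IH i1 s1 by blast
      then have "(\<lambda>x. \<psi>1 x + (\<lambda>x. \<psi> c * ?b x) x) \<in> V" using Vadd Vscal[OF ballc] by blast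
      moreover have "(\<lambda>x. \<psi>1 x + (\<lambda>x. \<psi> c * ?b x) x) = \<psi>" unfolding \<psi>1_def by (simp add: algebra_simps)
      ultimately show "\<psi> \<in> V" by simp
    qed
  qed
  assume i: "invc v n \<psi>" and s: "suppc v m \<psi>"
  let ?n = "max n m"
  have i': "invc v ?n \<psi>" using i close_mono[of n ?n] unfolding invc_def by simp
  obtain C where C: "finite C" "\<forall>y. close v m y 0 \<longrightarrow> (\<exists>c\<in>C. close v (m + int (nat (?n - m))) y c)"
    using cover by blast
  have "m + int (nat (?n - m)) = ?n" by simp
  then have "\<forall>y. \<psi> y \<noteq> 0 \<longrightarrow> (\<exists>c\<in>C. close v ?n y c)" using C(2) s unfolding suppc_def by metis
  then show "\<psi> \<in> V" using fin[OF C(1)] i' by blast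
qed

end

lemma mmul_assoc: "mmul (mmul g h) k = mmul g (mmul (h::'f::field mat2) k)"
  by (cases g rule: prod_cases4; cases h rule: prod_cases4; cases k rule: prod_cases4) (simp add: algebra_simps)

lemma mmul_one [simp]: "mmul g one2 = g" "mmul one2 g = (g::'f::field mat2)"
  by (cases g rule: prod_cases4; simp add: one2_def)+

lemma GL2_mul: "g \<in> GL2 \<Longrightarrow> h \<in> GL2 \<Longrightarrow> mmul g h \<in> (GL2::'f::field mat2 set)"
proof (cases g rule: prod_cases4; cases h rule: prod_cases4)
  fix a b c d a' b' c' d' :: 'f
  assume g: "g \<in> GL2" "h \<in> GL2" "g = (a,b,c,d)" "h = (a',b',c',d')"
  have e: "(a * a' + b * c') * (c * b' + d * d') - (a * b' + b * d') * (c * a' + d * c')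
     = (a * d - b * c) * (a' * d' - b' * c')" by (simp add: algebra_simps)
  have nz: "(a * d - b * c) * (a' * d' - b' * c') \<noteq> 0" using g by (simp add: GL2_def)
  have X: "(a * a' + b * c') * (c * b' + d * d') - (a * b' + b * d') * (c * a' + d * c') \<noteq> 0"
    unfolding e by (rule nz)
  show "mmul g h \<in> GL2" using X unfolding g(3,4) GL2_def by simp
qed

lemma Borel_GL2: "b \<in> Borel \<Longrightarrow> b \<in> GL2"
  by (cases b rule: prod_cases4) (auto simp: Borel_def GL2_def)

lemma one2_GL2: "one2 \<in> GL2"
  by (simp add: one2_def GL2_def)

context nalf begin

lemma mclose_mono: "m \<le> n \<Longrightarrow> mclose v n g h \<Longrightarrow> mclose v m g h"
  by (cases g rule: prod_cases4; cases h rule: prod_cases4) (auto intro: close_mono)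

lemma close_mult_any:
  assumes "close v N x y" "N \<ge> n + \<bar>v e\<bar>"
  shows "close v n (x * e) (y * e)"
proof -
  have "bal v (- \<bar>v e\<bar>) e" unfolding bal_def by auto
  then have "close v (N + - \<bar>v e\<bar>) (x * e) (y * e)" by (rule close_mult[OF assms(1)])
  then show ?thesis by (rule close_mono[rotated]) (use assms(2) in simp)
qed

lemma mclose_rmul:
  assumes "mclose v N g h" "N \<ge> n + \<bar>v b1\<bar> + \<bar>v b2\<bar> + \<bar>v b3\<bar> + \<bar>v b4\<bar>"
  shows "mclose v n (mmul g (b1,b2,b3,b4)) (mmul h (b1,b2,b3,b4))"
proof (cases g rule: prod_cases4; cases h rule: prod_cases4)
  fix a b c d a' b' c' d' :: 'f
  assume gh: "g = (a,b,c,d)" "h = (a',b',c',d')"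
  have c: "close v N a a'" "close v N b b'" "close v N c c'" "close v N d d'" using assms(1) gh by auto
  have n1: "N \<ge> n + \<bar>v b1\<bar>" "N \<ge> n + \<bar>v b2\<bar>" "N \<ge> n + \<bar>v b3\<bar>" "N \<ge> n + \<bar>v b4\<bar>" using assms(2) by auto
  note cm = close_mult_any
  show ?thesis unfolding gh
    by (simp add: close_add cm[OF c(1) n1(1)] cm[OF c(2) n1(3)] cm[OF c(1) n1(2)] cm[OF c(2) n1(4)]
        cm[OF c(3) n1(1)] cm[OF c(4) n1(3)] cm[OF c(3) n1(2)] cm[OF c(4) n1(4)])
qed

lemma Ind_add:
  assumes "f \<in> Ind v chi" "g \<in> Ind v chi"
  shows "(\<lambda>x. f x + g x) \<in> Ind v chi"
proof -
  have lf: "\<forall>g\<in>GL2. \<exists>n. \<forall>h\<in>GL2. mclose v n g h \<longrightarrow> f h = f g"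
   and lg: "\<forall>g'\<in>GL2. \<exists>n. \<forall>h\<in>GL2. mclose v n g' h \<longrightarrow> g h = g g'"
    using assms unfolding Ind_def locally_constant_G_def by auto
  have "locally_constant_G v (\<lambda>x. f x + g x)" unfolding locally_constant_G_def
  proof
    fix g0 :: "'f mat2" assume g0: "g0 \<in> GL2"
    obtain n1 where n1: "\<forall>h\<in>GL2. mclose v n1 g0 h \<longrightarrow> f h = f g0" using lf g0 by blast
    obtain n2 where n2: "\<forall>h\<in>GL2. mclose v n2 g0 h \<longrightarrow> g h = g g0" using lg g0 by blast
    show "\<exists>n. \<forall>h\<in>GL2. mclose v n g0 h \<longrightarrow> f h + g h = f g0 + g g0"
      using n1 n2 mclose_mono[of n1 "max n1 n2"] mclose_mono[of n2 "max n1 n2"]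
      by (intro exI[of _ "max n1 n2"]) auto
  qed
  then show ?thesis using assms unfolding Ind_def by (simp add: distrib_left)
qed

lemma Ind_scal:
  assumes "f \<in> Ind v chi"
  shows "(\<lambda>x. c * f x) \<in> Ind v chi"
proof -
  have lf: "\<forall>g\<in>GL2. \<exists>n. \<forall>h\<in>GL2. mclose v n g h \<longrightarrow> f h = f g"
    using assms unfolding Ind_def locally_constant_G_def by auto
  have "locally_constant_G v (\<lambda>x. c * f x)" unfolding locally_constant_G_def
  proof
    fix g0 :: "'f mat2" assume g0: "g0 \<in> GL2"
    obtain n1 where n1: "\<forall>h\<in>GL2. mclose v n1 g0 h \<longrightarrow> f h = f g0" using lf g0 by blast
    show "\<exists>n. \<forall>h\<in>GL2. mclose v n g0 h \<longrightarrow> c * f h = c * f g0"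
      using n1 by (intro exI[of _ n1]) auto
  qed
  then show ?thesis using assms unfolding Ind_def by (simp add: mult.left_commute)
qed

lemma Ind_rtrans:
  assumes "f \<in> Ind v chi" "b \<in> Borel"
  shows "rtrans b f \<in> Ind v chi"
proof -
  obtain b1 b2 b3 b4 where bb: "b = (b1,b2,b3,b4)" by (cases b rule: prod_cases4)
  have bG: "b \<in> GL2" using Borel_GL2 assms(2) .
  have lf: "\<forall>g\<in>GL2. \<exists>n. \<forall>h\<in>GL2. mclose v n g h \<longrightarrow> f h = f g"
    using assms unfolding Ind_def locally_constant_G_def by auto
  have eqv: "\<forall>b\<in>Borel. \<forall>g\<in>GL2. f (mmul b g) = charP chi b * f g" using assms unfolding Ind_def by auto
  have "locally_constant_G v (rtrans b f)" unfolding locally_constant_G_def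
  proof
    fix g :: "'f mat2" assume g: "g \<in> GL2"
    have gb: "mmul g b \<in> GL2" using GL2_mul[OF g bG] .
    obtain n where n: "\<forall>h\<in>GL2. mclose v n (mmul g b) h \<longrightarrow> f h = f (mmul g b)" using lf gb by blast
    let ?N = "n + \<bar>v b1\<bar> + \<bar>v b2\<bar> + \<bar>v b3\<bar> + \<bar>v b4\<bar>"
    show "\<exists>n. \<forall>h\<in>GL2. mclose v n g h \<longrightarrow> rtrans b f h = rtrans b f g"
    proof (intro exI[of _ ?N] ballI impI)
      fix h assume h: "h \<in> GL2" "mclose v ?N g h"
      have "mclose v n (mmul g b) (mmul h b)" unfolding bb by (rule mclose_rmul[OF h(2)]) simp
      then have "f (mmul h b) = f (mmul g b)" using n GL2_mul[OF h(1) bG] by blast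
      then show "rtrans b f h = rtrans b f g" unfolding rtrans_def using g h(1) by simp
    qed
  qed
  moreover have "\<forall>x. x \<notin> GL2 \<longrightarrow> rtrans b f x = 0" unfolding rtrans_def by simp
  moreover have "\<forall>b'\<in>Borel. \<forall>g\<in>GL2. rtrans b f (mmul b' g) = charP chi b' * rtrans b f g"
  proof (intro ballI)
    fix b' g :: "'f mat2" assume b': "b' \<in> Borel" and g: "g \<in> GL2"
    have "mmul b' g \<in> GL2" using GL2_mul[OF Borel_GL2[OF b'] g] .
    then have "rtrans b f (mmul b' g) = f (mmul b' (mmul g b))" unfolding rtrans_def by (simp add: mmul_assoc)
    also have "\<dots> = charP chi b' * f (mmul g b)" using eqv b' GL2_mul[OF g bG] by blast
    finally show "rtrans b f (mmul b' g) = charP chi b' * rtrans b f g" unfolding rtrans_def using g by simp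
  qed
  ultimately show ?thesis unfolding Ind_def by blast
qed

end

locale mainl = nalf v p for v :: "'f::field \<Rightarrow> int" and p +
  fixes chi :: "'f \<Rightarrow> 'f \<Rightarrow> 'k::field" and scale :: "'k \<Rightarrow> 'w::ab_group_add \<Rightarrow> 'w"
    and act :: "'f mat2 \<Rightarrow> 'w \<Rightarrow> 'w" and \<phi> :: "('f mat2 \<Rightarrow> 'k) \<Rightarrow> 'w"
  assumes Fp: "is_Fpbar p TYPE('k)" and sc: "smooth_char_T v chi"
    and ns: "\<exists>a d. a \<noteq> 0 \<and> d \<noteq> 0 \<and> chi a d \<noteq> conj_s chi a d"
    and rep: "smooth_rep v scale act" and hom: "\<phi> \<in> HomP v chi scale act"
begin

lemma chi_nz: "a \<noteq> 0 \<Longrightarrow> d \<noteq> 0 \<Longrightarrow> chi a d \<noteq> 0"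
  using sc unfolding smooth_char_T_def by blast

lemma chi_mul: "a \<noteq> 0 \<Longrightarrow> d \<noteq> 0 \<Longrightarrow> a' \<noteq> 0 \<Longrightarrow> d' \<noteq> 0 \<Longrightarrow> chi (a * a') (d * d') = chi a d * chi a' d'"
  using sc unfolding smooth_char_T_def by blast

lemma chi11: "chi 1 1 = 1"
  using chi_mul[of 1 1 1 1] chi_nz[of 1 1] by simp

lemma vs: "vector_space scale" using rep unfolding smooth_rep_def by blast
lemma md: "module scale" using vs by (simp add: vector_space_def module_def)

lemma act_lin: "g \<in> GL2 \<Longrightarrow> Vector_Spaces.linear scale scale (act g)"
  using rep unfolding smooth_rep_def by blast
lemma act_add: "g \<in> GL2 \<Longrightarrow> act g (x + y) = act g x + act g y"
  using act_lin[of g] unfolding Vector_Spaces.linear_iff by blast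
lemma act_scale: "g \<in> GL2 \<Longrightarrow> act g (scale c x) = scale c (act g x)"
  using act_lin[of g] unfolding Vector_Spaces.linear_iff by blast
lemma act_0: "g \<in> GL2 \<Longrightarrow> act g 0 = 0"
  using act_add[of g 0 0] by simp
lemma act_comp: "g \<in> GL2 \<Longrightarrow> h \<in> GL2 \<Longrightarrow> act (mmul g h) w = act g (act h w)"
  using rep unfolding smooth_rep_def by blast
lemma act_one: "act one2 w = w"
  using rep unfolding smooth_rep_def by blast
lemma smooth: "\<exists>n. \<forall>g\<in>Kcong v n. act g w = w"
  using rep unfolding smooth_rep_def by blast

lemma phi_add: "f \<in> Ind v chi \<Longrightarrow> g \<in> Ind v chi \<Longrightarrow> \<phi> (\<lambda>x. f x + g x) = \<phi> f + \<phi> g"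
  using hom unfolding HomP_def by blast
lemma phi_scal: "f \<in> Ind v chi \<Longrightarrow> \<phi> (\<lambda>x. c * f x) = scale c (\<phi> f)"
  using hom unfolding HomP_def by blast
lemma phi_eq: "b \<in> Borel \<Longrightarrow> f \<in> Ind v chi \<Longrightarrow> \<phi> (rtrans b f) = act b (\<phi> f)"
  using hom unfolding HomP_def by blast

lemma scale_eq_self: "scale c w = w \<Longrightarrow> w \<noteq> 0 \<Longrightarrow> c = 1"
proof -
  assume a: "scale c w = w" "w \<noteq> 0"
  have "scale (c - 1) w = scale c w - scale 1 w" by (rule module.scale_left_diff_distrib[OF md])
  also have "\<dots> = 0" using a module.scale_one[OF md] by simp
  finally show "c = 1" using vector_space.scale_eq_0_iff[OF vs] a(2) by simp
qed

lemma no_eigen: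
  assumes w0: "w0 \<noteq> 0" and eig: "\<forall>b\<in>Borel. act b w0 = scale (charP chi b) w0"
  shows False
proof -
  have fixc: "act (mmul g h) w0 = w0" if "g \<in> GL2" "h \<in> GL2" "act g w0 = w0" "act h w0 = w0" for g h
    using act_comp[OF that(1,2)] that(3,4) by simp
  have uB: "(1, x, 0, 1) \<in> Borel" for x :: 'f by (simp add: Borel_def)
  have uG: "(1, x, 0, 1) \<in> GL2" for x :: 'f by (simp add: GL2_def)
  have lG: "(1, 0, x, 1) \<in> GL2" for x :: 'f by (simp add: GL2_def)
  have ufix: "act (1, x, 0, 1) w0 = w0" for x
    using eig uB[of x] chi11 module.scale_one[OF md] by simp
  obtain n where n: "\<forall>g\<in>Kcong v n. act g w0 = w0" using smooth by blast
  have lfix: "act (1, 0, c, 1) w0 = w0" for c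
  proof (cases "c = 0")
    case True
    then show ?thesis using act_one by (simp add: one2_def)
  next
    case False
    obtain s where s: "s \<noteq> 0" "v s = n - v c" using vsurj by blast
    define e where "e = c * s"
    have e0: "e \<noteq> 0" using False s(1) unfolding e_def by simp
    have ve: "v e = n" unfolding e_def using vmul[OF False s(1)] s(2) by simp
    have "(1, 0, e, 1) \<in> Kcong v n"
      unfolding Kcong_def using lG[of e] ve by (simp add: one2_def close_def vneg)
    then have le: "act (1, 0, e, 1) w0 = w0" using n by blast
    have tB: "(s, 0, 0, 1) \<in> Borel" "(inverse s, 0, 0, 1) \<in> Borel" using s(1) by (auto simp: Borel_def)
    have tG: "(s, 0, 0, 1) \<in> GL2" "(inverse s, 0, 0, 1) \<in> GL2" using tB Borel_GL2 by auto
    have prod: "mmul (s, 0, 0, 1) (mmul (1, 0, e, 1) (inverse s, 0, 0, 1)) = (1, 0, c, 1)"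
      using s(1) unfolding e_def by simp
    have "act (1, 0, c, 1) w0 = act (s, 0, 0, 1) (act (1, 0, e, 1) (act (inverse s, 0, 0, 1) w0))"
      unfolding prod[symmetric] using act_comp tG lG GL2_mul by metis
    also have "\<dots> = act (s, 0, 0, 1) (act (1, 0, e, 1) (scale (chi (inverse s) 1) w0))"
      using eig tB by simp
    also have "\<dots> = scale (chi (inverse s) 1) (act (s, 0, 0, 1) w0)"
      using act_scale lG tG le by simp
    also have "\<dots> = scale (chi (inverse s) 1) (scale (chi s 1) w0)"
      using eig tB by simp
    also have "\<dots> = scale (chi (inverse s) 1 * chi s 1) w0"
      by (simp add: module.scale_scale[OF md])
    also have "chi (inverse s) 1 * chi s 1 = 1"
      using chi_mul[of "inverse s" 1 s 1] s(1) chi11 by simp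
    finally show ?thesis using module.scale_one[OF md] by simp
  qed
  have dfix: "act (a, 0, 0, inverse a) w0 = w0" if a: "a \<noteq> 0" for a
  proof -
    let ?X = "mmul (1, - 1, 0, 1) (mmul (1, 0, 1, 1) (1, - 1, 0, 1)) :: 'f mat2"
    have XG: "?X \<in> GL2" by (intro GL2_mul uG lG)
    have Xf: "act ?X w0 = w0" by (intro fixc GL2_mul uG lG ufix lfix)
    let ?Y = "mmul (1, a, 0, 1) (mmul (1, 0, - inverse a, 1) (mmul (1, a, 0, 1) ?X))"
    have Yf: "act ?Y w0 = w0" by (intro fixc GL2_mul uG lG ufix lfix XG Xf)
    have "?Y = (a, 0, 0, inverse a)" using a by (simp add: field_simps)
    then show ?thesis using Yf by simp
  qed
  have c1: "chi a (inverse a) = 1" if a: "a \<noteq> 0" for a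
  proof -
    have "(a, 0, 0, inverse a) \<in> Borel" using a by (simp add: Borel_def)
    then have "scale (chi a (inverse a)) w0 = w0" using eig dfix[OF a] by simp
    then show ?thesis using scale_eq_self w0 by blast
  qed
  have sym: "chi a 1 = chi 1 a" if a: "a \<noteq> 0" for a
  proof -
    have "chi a 1 * chi 1 (inverse a) = 1" using c1[OF a] chi_mul[of a 1 1 "inverse a"] a by simp
    moreover have "chi 1 a * chi 1 (inverse a) = 1" using chi_mul[of 1 a 1 "inverse a"] a chi11 by simp
    moreover have "chi 1 (inverse a) \<noteq> 0" using chi_nz a by simp
    ultimately show ?thesis by (metis mult_right_cancel)
  qed
  obtain a d where ad: "a \<noteq> 0" "d \<noteq> 0" "chi a d \<noteq> chi d a" using ns unfolding conj_s_def by blast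
  have "chi a d = chi a 1 * chi 1 d" using chi_mul[of a 1 1 d] ad by simp
  also have "\<dots> = chi 1 a * chi d 1" using sym ad by simp
  also have "\<dots> = chi d a" using chi_mul[of d 1 1 a] ad by (simp add: mult.commute)
  finally show False using ad(3) by simp
qed

end

context mainl begin

lemma zeroInd: "(\<lambda>x. 0) \<in> Ind v chi"
  unfolding Ind_def locally_constant_G_def by simp

lemma Ind_eqv: "f \<in> Ind v chi \<Longrightarrow> b \<in> Borel \<Longrightarrow> g \<in> GL2 \<Longrightarrow> f (mmul b g) = charP chi b * f g"
  unfolding Ind_def by blast

lemma Ind_out: "f \<in> Ind v chi \<Longrightarrow> g \<notin> GL2 \<Longrightarrow> f g = 0"
  unfolding Ind_def by blast

lemma Ind_lc: "f \<in> Ind v chi \<Longrightarrow> g \<in> GL2 \<Longrightarrow> \<exists>n. \<forall>h\<in>GL2. mclose v n g h \<longrightarrow> f h = f g"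
  unfolding Ind_def locally_constant_G_def by blast

lemma wG: "(0, 1, 1, x) \<in> (GL2 :: 'f mat2 set)" by (simp add: GL2_def)

lemma Sval:
  assumes f: "f \<in> Ind v chi" and f1: "f one2 = 0"
  shows "f (a, b, c, d) = (if a * d - b * c \<noteq> 0 \<and> c \<noteq> 0 then chi (b - a * d / c) c * f (0, 1, 1, d / c) else 0)"
proof (cases "(a, b, c, d) \<in> GL2")
  case False
  then show ?thesis using Ind_out[OF f] by (auto simp: GL2_def)
next
  case G: True
  then have det: "a * d - b * c \<noteq> 0" by (simp add: GL2_def)
  show ?thesis
  proof (cases "c = 0")
    case True
    then have "(a, b, c, d) \<in> Borel" using det by (auto simp: Borel_def)
    then have "f (mmul (a, b, c, d) one2) = charP chi (a, b, c, d) * f one2" using Ind_eqv[OF f _ one2_GL2] by blast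
    then show ?thesis using f1 True by simp
  next
    case False
    have nz: "b - a * d / c \<noteq> 0"
    proof
      assume "b - a * d / c = 0"
      then have "b * c - a * d = 0" using False by (simp add: field_simps)
      then show False using det by (simp add: algebra_simps)
    qed
    have bB: "(b - a * d / c, a, 0, c) \<in> Borel" using nz False by (simp add: Borel_def)
    have e: "mmul (b - a * d / c, a, 0, c) (0, 1, 1, d / c) = (a, b, c, d)" using False by (simp add: field_simps)
    have "f (mmul (b - a * d / c, a, 0, c) (0, 1, 1, d / c)) = charP chi (b - a * d / c, a, 0, c) * f (0, 1, 1, d / c)"
      by (rule Ind_eqv[OF f bB wG])
    then have "f (a, b, c, d) = charP chi (b - a * d / c, a, 0, c) * f (0, 1, 1, d / c)"
      by (simp only: e)
    then show ?thesis using det False by simp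
  qed
qed

lemma Sdet:
  assumes "f \<in> Ind v chi" "f' \<in> Ind v chi" "f one2 = 0" "f' one2 = 0"
    "\<forall>x. f (0, 1, 1, x) = f' (0, 1, 1, x)"
  shows "f = f'"
proof
  fix g :: "'f mat2"
  obtain a b c d where g: "g = (a, b, c, d)" by (cases g rule: prod_cases4)
  have e1: "f (a, b, c, d) = (if a * d - b * c \<noteq> 0 \<and> c \<noteq> 0 then chi (b - a * d / c) c * f (0, 1, 1, d / c) else 0)"
    by (rule Sval[OF assms(1,3)])
  have e2: "f' (a, b, c, d) = (if a * d - b * c \<noteq> 0 \<and> c \<noteq> 0 then chi (b - a * d / c) c * f' (0, 1, 1, d / c) else 0)"
    by (rule Sval[OF assms(2,4)])
  show "f g = f' g" unfolding g e1 e2 using assms(5) by presburger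
qed

lemma S2:
  assumes f: "f \<in> Ind v chi"
  shows "\<forall>x. \<exists>n. \<forall>y. close v n x y \<longrightarrow> f (0, 1, 1, y) = f (0, 1, 1, x)"
proof
  fix x
  obtain n where n: "\<forall>h\<in>GL2. mclose v n (0, 1, 1, x) h \<longrightarrow> f h = f (0, 1, 1, x)"
    using Ind_lc[OF f wG] by blast
  show "\<exists>n. \<forall>y. close v n x y \<longrightarrow> f (0, 1, 1, y) = f (0, 1, 1, x)"
  proof (intro exI[of _ n] allI impI)
    fix y assume "close v n x y"
    then have "mclose v n (0, 1, 1, x) (0, 1, 1, y)" by simp
    then show "f (0, 1, 1, y) = f (0, 1, 1, x)" using n[rule_format, OF wG[of y]] by blast
  qed
qed

lemma S3:
  assumes f: "f \<in> Ind v chi" and f1: "f one2 = 0"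
  shows "\<exists>m. suppc v m (\<lambda>x. f (0, 1, 1, x))"
proof -
  obtain n where n: "\<forall>h\<in>GL2. mclose v n one2 h \<longrightarrow> f h = f one2"
    using Ind_lc[OF f one2_GL2] by blast
  have "suppc v (1 - n) (\<lambda>x. f (0, 1, 1, x))" unfolding suppc_def
  proof (intro allI impI)
    fix y assume y: "\<not> close v (1 - n) y 0"
    then have y0: "y \<noteq> 0" and vy: "v y < 1 - n" by (auto simp: close_def)
    have vi: "v (inverse y) \<ge> n" using vinv[OF y0] vy by simp
    have lG: "(1, 0, inverse y, 1) \<in> GL2" by (simp add: GL2_def)
    have "mclose v n one2 (1, 0, inverse y, 1)"
      using vi by (simp add: one2_def close_def vneg)
    then have l0: "f (1, 0, inverse y, 1) = 0" using n[rule_format, OF lG] f1 by simp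
    have bB: "(- inverse y, 1, 0, y) \<in> Borel" using y0 by (simp add: Borel_def)
    have e: "mmul (- inverse y, 1, 0, y) (1, 0, inverse y, 1) = (0, 1, 1, y)" using y0 by simp
    have "f (mmul (- inverse y, 1, 0, y) (1, 0, inverse y, 1)) = charP chi (- inverse y, 1, 0, y) * f (1, 0, inverse y, 1)"
      by (rule Ind_eqv[OF f bB lG])
    then have "f (0, 1, 1, y) = charP chi (- inverse y, 1, 0, y) * f (1, 0, inverse y, 1)"
      by (simp only: e)
    then show "f (0, 1, 1, y) = 0" using l0 by simp
  qed
  then show ?thesis by blast
qed

end

context mainl begin

lemma rtrans_one2:
  assumes "f \<in> Ind v chi" "b \<in> Borel"
  shows "rtrans b f one2 = charP chi b * f one2"
proof -
  have "rtrans b f one2 = f (mmul one2 b)" unfolding rtrans_def by (rule if_P[OF one2_GL2])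
  also have "\<dots> = f (mmul b one2)" by simp
  also have "\<dots> = charP chi b * f one2" by (rule Ind_eqv[OF assms one2_GL2])
  finally show ?thesis .
qed

lemma phi_rt_comb:
  assumes f: "f \<in> Ind v chi" and b: "b \<in> Borel"
  shows "\<phi> (\<lambda>x. rtrans b f x + (- charP chi b) * f x) = act b (\<phi> f) - scale (charP chi b) (\<phi> f)"
proof -
  have "\<phi> (\<lambda>x. rtrans b f x + (- charP chi b) * f x) = \<phi> (rtrans b f) + \<phi> (\<lambda>x. (- charP chi b) * f x)"
    by (rule phi_add[OF Ind_rtrans[OF f b] Ind_scal[OF f]])
  also have "\<dots> = act b (\<phi> f) + scale (- charP chi b) (\<phi> f)"
    by (simp only: phi_eq[OF b f] phi_scal[OF f])
  also have "\<dots> = act b (\<phi> f) - scale (charP chi b) (\<phi> f)"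
    using module.scale_minus_left[OF md] by simp
  finally show ?thesis .
qed

lemma step1:
  assumes h: "h \<in> Ind v chi" "\<phi> h = 0" "h \<noteq> (\<lambda>x. 0)"
  shows "\<exists>f\<in>Ind v chi. \<phi> f = 0 \<and> f one2 = 0 \<and> f \<noteq> (\<lambda>x. 0)"
proof (cases "h one2 = 0")
  case True then show ?thesis using h by blast
next
  case False
  show ?thesis
  proof (rule ccontr)
    assume nf: "\<not> ?thesis"
    have eig: "h (mmul x b) = charP chi b * h x" if b: "b \<in> Borel" and x: "x \<in> GL2" for b x
    proof -
      define g where "g = (\<lambda>x. rtrans b h x + (- charP chi b) * h x)"
      have gI: "g \<in> Ind v chi" unfolding g_def by (intro Ind_add Ind_rtrans Ind_scal h(1) b)
      have "\<phi> g = 0" unfolding g_def phi_rt_comb[OF h(1) b] using h(2) act_0[OF Borel_GL2[OF b]] module.scale_zero_right[OF md] by simp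
      moreover have "g one2 = 0" unfolding g_def using rtrans_one2[OF h(1) b] by simp
      ultimately have "g = (\<lambda>x. 0)" using nf gI by blast
      then have "g x = 0" by simp
      then show ?thesis unfolding g_def rtrans_def using x by simp
    qed
    define w :: "'f mat2" where "w = (0, 1, 1, 0)"
    have wG: "w \<in> GL2" unfolding w_def by (simp add: GL2_def)
    obtain a d where ad: "a \<noteq> 0" "d \<noteq> 0" "chi a d \<noteq> chi d a" using ns unfolding conj_s_def by blast
    have B1: "(a, 0, 0, d) \<in> Borel" "(d, 0, 0, a) \<in> Borel" using ad by (auto simp: Borel_def)
    have e1: "mmul w (a, 0, 0, d) = (0, d, a, 0)" "mmul (d, 0, 0, a) w = (0, d, a, 0)" unfolding w_def by simp_all
    have "h (0, d, a, 0) = chi a d * h w" using eig[OF B1(1) wG] unfolding e1 by simp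
    moreover have "h (0, d, a, 0) = chi d a * h w" using Ind_eqv[OF h(1) B1(2) wG] unfolding e1 by simp
    ultimately have hw: "h w = 0" using ad(3) by simp
    obtain n where n: "\<forall>g\<in>GL2. mclose v n one2 g \<longrightarrow> h g = h one2" using Ind_lc[OF h(1) one2_GL2] by blast
    obtain c where c: "c \<noteq> 0" "v c = n" using vsurj by blast
    have uB: "(1, inverse c, 0, 1) \<in> Borel" by (simp add: Borel_def)
    have bB: "(- inverse c, 1, 0, c) \<in> Borel" using c by (simp add: Borel_def)
    have wuG: "mmul w (1, inverse c, 0, 1) \<in> GL2" using GL2_mul[OF wG Borel_GL2[OF uB]] .
    have e2: "mmul (- inverse c, 1, 0, c) (mmul w (1, inverse c, 0, 1)) = (1, 0, c, 1)"
      unfolding w_def using c by simp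
    have "h (mmul w (1, inverse c, 0, 1)) = 0" using eig[OF uB wG] hw by simp
    then have "h (mmul (- inverse c, 1, 0, c) (mmul w (1, inverse c, 0, 1))) = 0"
      using Ind_eqv[OF h(1) bB wuG] by simp
    then have l0: "h (1, 0, c, 1) = 0" unfolding e2 .
    have lG: "(1, 0, c, 1) \<in> GL2" by (simp add: GL2_def)
    have "mclose v n one2 (1, 0, c, 1)" using c by (simp add: one2_def close_def vneg)
    then have "h (1, 0, c, 1) = h one2" using n[rule_format, OF lG] by blast
    then show False using l0 False by simp
  qed
qed

lemma step3:
  assumes S: "\<forall>f\<in>Ind v chi. f one2 = 0 \<longrightarrow> \<phi> f = 0" and f0: "f0 \<in> Ind v chi" "\<phi> f0 \<noteq> 0"
  shows False
proof -
  have "\<forall>b\<in>Borel. act b (\<phi> f0) = scale (charP chi b) (\<phi> f0)"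
  proof
    fix b :: "'f mat2" assume b: "b \<in> Borel"
    define g where "g = (\<lambda>x. rtrans b f0 x + (- charP chi b) * f0 x)"
    have gI: "g \<in> Ind v chi" unfolding g_def by (intro Ind_add Ind_rtrans Ind_scal f0(1) b)
    have "g one2 = 0" unfolding g_def using rtrans_one2[OF f0(1) b] by simp
    then have "\<phi> g = 0" using S gI by blast
    then show "act b (\<phi> f0) = scale (charP chi b) (\<phi> f0)" unfolding g_def phi_rt_comb[OF f0(1) b] by simp
  qed
  then show False using no_eigen f0(2) by blast
qed

end

context mainl begin

lemma cp: "CHAR('k) = p" "prime p" using Fp unfolding is_Fpbar_def by auto

lemma step2:
  assumes f0: "f0 \<in> Ind v chi" "\<phi> f0 = 0" "f0 one2 = 0" "f0 \<noteq> (\<lambda>x. 0)"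
  shows "\<forall>f\<in>Ind v chi. f one2 = 0 \<longrightarrow> \<phi> f = 0"
proof -
  define V where "V = {\<psi>. \<exists>f\<in>Ind v chi. \<phi> f = 0 \<and> f one2 = 0 \<and> \<psi> = (\<lambda>x. f (0, 1, 1, x))}"
  have Vmem: "(\<lambda>x. f (0, 1, 1, x)) \<in> V" if "f \<in> Ind v chi" "\<phi> f = 0" "f one2 = 0" for f
    unfolding V_def using that by blast
  have Vadd: "(\<lambda>x. \<psi>1 x + \<psi>2 x) \<in> V" if a1: "\<psi>1 \<in> V" and a2: "\<psi>2 \<in> V" for \<psi>1 \<psi>2
  proof -
    obtain f1 where f1: "f1 \<in> Ind v chi" "\<phi> f1 = 0" "f1 one2 = 0" "\<psi>1 = (\<lambda>x. f1 (0, 1, 1, x))"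
      using a1 unfolding V_def by blast
    obtain f2 where f2: "f2 \<in> Ind v chi" "\<phi> f2 = 0" "f2 one2 = 0" "\<psi>2 = (\<lambda>x. f2 (0, 1, 1, x))"
      using a2 unfolding V_def by blast
    have "(\<lambda>x. f1 x + f2 x) \<in> Ind v chi" by (rule Ind_add[OF f1(1) f2(1)])
    moreover have "\<phi> (\<lambda>x. f1 x + f2 x) = 0" using phi_add[OF f1(1) f2(1)] f1(2) f2(2) by simp
    moreover have "(\<lambda>x. f1 x + f2 x) one2 = 0" using f1(3) f2(3) by simp
    ultimately have "(\<lambda>x. (\<lambda>y. f1 y + f2 y) (0, 1, 1, x)) \<in> V" by (rule Vmem)
    then show ?thesis using f1(4) f2(4) by simp
  qed
  have Vscal: "(\<lambda>x. c * \<psi> x) \<in> V" if hv: "\<psi> \<in> V" for \<psi> c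
  proof -
    obtain f where f: "f \<in> Ind v chi" "\<phi> f = 0" "f one2 = 0" "\<psi> = (\<lambda>x. f (0, 1, 1, x))"
      using hv unfolding V_def by blast
    have "(\<lambda>x. c * f x) \<in> Ind v chi" by (rule Ind_scal[OF f(1)])
    moreover have "\<phi> (\<lambda>x. c * f x) = 0" using phi_scal[OF f(1)] f(2) module.scale_zero_right[OF md] by simp
    moreover have "(\<lambda>x. c * f x) one2 = 0" using f(3) by simp
    ultimately have "(\<lambda>x. (\<lambda>y. c * f y) (0, 1, 1, x)) \<in> V" by (rule Vmem)
    then show ?thesis using f(4) by simp
  qed
  have rt0: "\<phi> (rtrans b f) = 0 \<and> rtrans b f one2 = 0 \<and> rtrans b f \<in> Ind v chi"
    if "f \<in> Ind v chi" "\<phi> f = 0" "f one2 = 0" "b \<in> Borel" for f b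
    using phi_eq[OF that(4,1)] that act_0[OF Borel_GL2[OF that(4)]] rtrans_one2[OF that(1,4)] Ind_rtrans[OF that(1,4)]
    by simp
  have Vtr: "(\<lambda>x. \<psi> (x + t)) \<in> V" if hv: "\<psi> \<in> V" for \<psi> t
  proof -
    obtain f where f: "f \<in> Ind v chi" "\<phi> f = 0" "f one2 = 0" "\<psi> = (\<lambda>x. f (0, 1, 1, x))"
      using hv unfolding V_def by blast
    have bB: "(1, t, 0, 1) \<in> Borel" by (simp add: Borel_def)
    have r: "\<phi> (rtrans (1, t, 0, 1) f) = 0 \<and> rtrans (1, t, 0, 1) f one2 = 0 \<and> rtrans (1, t, 0, 1) f \<in> Ind v chi"
      by (rule rt0[OF f(1-3) bB])
    have "(\<lambda>x. rtrans (1, t, 0, 1) f (0, 1, 1, x)) = (\<lambda>x. \<psi> (x + t))"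
    proof
      fix x
      have e: "mmul (0, 1, 1, x) (1, t, 0, 1) = (0, 1, 1, x + t)" by (simp add: add.commute)
      have "rtrans (1, t, 0, 1) f (0, 1, 1, x) = f (mmul (0, 1, 1, x) (1, t, 0, 1))"
        unfolding rtrans_def by (rule if_P[OF wG])
      also have "\<dots> = \<psi> (x + t)" unfolding e f(4) by (rule refl)
      finally show "rtrans (1, t, 0, 1) f (0, 1, 1, x) = \<psi> (x + t)" .
    qed
    moreover have "(\<lambda>x. rtrans (1, t, 0, 1) f (0, 1, 1, x)) \<in> V" using Vmem r by blast
    ultimately show ?thesis by simp
  qed
  have Vdil: "(\<lambda>x. \<psi> (a * x)) \<in> V" if hv: "\<psi> \<in> V" and a0: "a \<noteq> 0" for \<psi> a
  proof -
    obtain f where f: "f \<in> Ind v chi" "\<phi> f = 0" "f one2 = 0" "\<psi> = (\<lambda>x. f (0, 1, 1, x))"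
      using hv unfolding V_def by blast
    let ?al = "inverse a"
    have al: "?al \<noteq> 0" using a0 by simp
    have bB: "(?al, 0, 0, 1) \<in> Borel" using al by (simp add: Borel_def)
    have dB: "(1, 0, 0, ?al) \<in> Borel" using al by (simp add: Borel_def)
    let ?f' = "rtrans (?al, 0, 0, 1) f"
    have r: "\<phi> ?f' = 0 \<and> ?f' one2 = 0 \<and> ?f' \<in> Ind v chi" by (rule rt0[OF f(1-3) bB])
    let ?k = "inverse (chi 1 ?al)"
    have k0: "chi 1 ?al \<noteq> 0" using chi_nz al by simp
    let ?f'' = "\<lambda>y. ?k * ?f' y"
    have I'': "?f'' \<in> Ind v chi" using Ind_scal r by blast
    have p'': "\<phi> ?f'' = 0" using phi_scal[of ?f' ?k] r module.scale_zero_right[OF md] by simp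
    have o'': "?f'' one2 = 0" using r by simp
    have "(\<lambda>x. ?f'' (0, 1, 1, x)) = (\<lambda>x. \<psi> (a * x))"
    proof
      fix x
      have e1: "mmul (0, 1, 1, x) (?al, 0, 0, 1) = mmul (1, 0, 0, ?al) (0, 1, 1, a * x)"
        using a0 by simp
      have "?f' (0, 1, 1, x) = f (mmul (1, 0, 0, ?al) (0, 1, 1, a * x))"
        unfolding rtrans_def e1[symmetric] using wG by simp
      also have "\<dots> = chi 1 ?al * f (0, 1, 1, a * x)"
        using Ind_eqv[OF f(1) dB wG] by simp
      finally show "?f'' (0, 1, 1, x) = \<psi> (a * x)" unfolding f(4) using k0 by simp
    qed
    moreover have "(\<lambda>x. ?f'' (0, 1, 1, x)) \<in> V" by (rule Vmem[OF I'' p'' o''])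
    ultimately show ?thesis by simp
  qed
  have vspV: "vsp v p V"
    unfolding vsp_def vsp_axioms_def
    apply (intro conjI nalf_axioms cp(1) cp(2) allI impI)
       apply (erule (1) Vadd)
      apply (erule Vscal)
     apply (erule Vtr)
    apply (erule (1) Vdil)
    done
  interpret W: vsp v p V by (rule vspV)
  let ?\<psi>0 = "\<lambda>x. f0 (0, 1, 1, x)"
  have psi0V: "?\<psi>0 \<in> V" unfolding V_def using f0 by blast
  have psi0nz: "?\<psi>0 \<noteq> (\<lambda>x. 0)"
  proof
    assume "?\<psi>0 = (\<lambda>x. 0)"
    then have "f0 = (\<lambda>x. 0)" using Sdet[OF f0(1) zeroInd f0(3)] by (simp add: fun_eq_iff)
    then show False using f0(4) by simp
  qed
  have unifS: "\<exists>n m. invc v n (\<lambda>x. f (0, 1, 1, x)) \<and> suppc v m (\<lambda>x. f (0, 1, 1, x))"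
    if hf: "f \<in> Ind v chi" "f one2 = 0" for f
  proof -
    obtain m where m: "suppc v m (\<lambda>x. f (0, 1, 1, x))" using S3[OF hf] by blast
    obtain n where "\<forall>x y. close v n x y \<longrightarrow> f (0, 1, 1, x) = f (0, 1, 1, y)"
      using unif[of "\<lambda>x. f (0, 1, 1, x)" m] S2[OF hf(1)] m unfolding suppc_def by auto
    then show ?thesis using m unfolding invc_def by blast
  qed
  obtain n0 m0 where nm0: "invc v n0 ?\<psi>0" "suppc v m0 ?\<psi>0" using unifS[OF f0(1) f0(3)] by blast
  have indV: "ind v m0 \<in> V" by (rule W.socle[OF psi0V psi0nz nm0])
  show ?thesis
  proof (intro ballI impI)
    fix f assume f: "f \<in> Ind v chi" "f one2 = 0"
    obtain n m where nm: "invc v n (\<lambda>x. f (0, 1, 1, x))" "suppc v m (\<lambda>x. f (0, 1, 1, x))"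
      using unifS[OF f] by blast
    have "(\<lambda>x. f (0, 1, 1, x)) \<in> V" by (rule W.gen[OF indV nm])
    then obtain f' where f': "f' \<in> Ind v chi" "\<phi> f' = 0" "f' one2 = 0" "(\<lambda>x. f (0, 1, 1, x)) = (\<lambda>x. f' (0, 1, 1, x))"
      unfolding V_def by blast
    have "f = f'" using Sdet[OF f(1) f'(1) f(2) f'(3)] f'(4) by (simp add: fun_eq_iff)
    then show "\<phi> f = 0" using f'(2) by simp
  qed
qed

lemma main_inj:
  assumes nz: "\<exists>f\<in>Ind v chi. \<phi> f \<noteq> 0"
  shows "inj_on \<phi> (Ind v chi)"
proof (rule inj_onI, rule ccontr)
  fix f1 f2 assume f: "f1 \<in> Ind v chi" "f2 \<in> Ind v chi" "\<phi> f1 = \<phi> f2" "f1 \<noteq> f2"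
  define h where "h = (\<lambda>x. f1 x + (-1) * f2 x)"
  have hI: "h \<in> Ind v chi" unfolding h_def by (intro Ind_add Ind_scal f(1,2))
  have "\<phi> h = \<phi> f1 + \<phi> (\<lambda>x. (-1) * f2 x)" unfolding h_def by (rule phi_add[OF f(1) Ind_scal[OF f(2)]])
  also have "\<dots> = \<phi> f1 + scale (-1) (\<phi> f2)" by (simp only: phi_scal[OF f(2)])
  also have "\<dots> = 0" using f(3) module.scale_minus_left[OF md, of 1] module.scale_one[OF md] by simp
  finally have ph: "\<phi> h = 0" .
  have hnz: "h \<noteq> (\<lambda>x. 0)"
  proof
    assume "h = (\<lambda>x. 0)"
    then have "f1 = f2" unfolding h_def by (simp add: fun_eq_iff)
    then show False using f(4) by simp
  qed
  obtain f0 where "f0 \<in> Ind v chi" "\<phi> f0 = 0" "f0 one2 = 0" "f0 \<noteq> (\<lambda>x. 0)" using step1[OF hI ph hnz] by blast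
  then have S: "\<forall>f\<in>Ind v chi. f one2 = 0 \<longrightarrow> \<phi> f = 0" by (rule step2)
  obtain g where "g \<in> Ind v chi" "\<phi> g \<noteq> 0" using nz by blast
  then show False using step3[OF S] by blast
qed

end

theorem corollary5p2:
  fixes v :: "'f::field \<Rightarrow> int" and p :: nat
    and chi :: "'f \<Rightarrow> 'f \<Rightarrow> 'k::field"
    and scale :: "'k \<Rightarrow> 'w::ab_group_add \<Rightarrow> 'w"
    and act :: "'f mat2 \<Rightarrow> 'w \<Rightarrow> 'w"
    and \<phi> :: "('f mat2 \<Rightarrow> 'k) \<Rightarrow> 'w"
  assumes "nonarch_local_field v p"
    and "is_Fpbar p TYPE('k)"
    and "smooth_char_T v chi"
    and "\<exists>a d. a \<noteq> 0 \<and> d \<noteq> 0 \<and> chi a d \<noteq> conj_s chi a d"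
    and "smooth_rep v scale act"
    and "\<phi> \<in> HomP v chi scale act"
    and "\<exists>f\<in>Ind v chi. \<phi> f \<noteq> 0"
  shows "inj_on \<phi> (Ind v chi)"
proof -
  have "mainl v p chi scale act \<phi>"
    by (intro mainl.intro nalf.intro mainl_axioms.intro assms(1-6))
  then interpret M: mainl v p chi scale act \<phi> .
  show ?thesis by (rule M.main_inj[OF assms(7)])
qed

end
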